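(* Let $\kappa_1,\kappa_2,d_1,d_2>0$ be constants (specific heats at constant volume and thermal conductivities of the liquid phase (index $1$) and vapor phase (index $2$)), let $\ell<0$ be a constant (the latent heat), let $j_\Gamma>0$ be a constant (the phase flux), let $r>0$ be a constant (the volume specific heat source), and let $\theta_*\in\mathbf{R}$ (the given interface temperature) and $\theta_{\mathrm{in}}<\theta_*$ (the entrance temperature). Consider the stationary free boundary problem of finding $x_*>0$, $\theta_1\colon[0,x_*]\to\mathbf{R}$ and $\theta_2\colon[x_*,\infty)\to\mathbf{R}$ such that \begin{align*} &\kappa_1 j_\Gamma \theta_1' - d_1\theta_1'' = r \quad\text{in } (0,x_* ),\\ &\kappa_2 j_\Gamma \theta_2' - d_2\theta_2'' = r \quad\text{in } (x_*,\infty),\\ &\theta_1(x_* )=\theta_2(x_* )=\theta_*,\\ &\ell j_\Gamma + d_2\theta_2'(x_* ) - d_1\theta_1'(x_* ) = 0,\\ &\theta_1(0)=\theta_{\mathrm{in}},\qquad \theta_1\le\theta_* \text{ on } [0,x_*], \end{align*} and $\theta_2$ grows at most linearly as $x\to\infty$. Then \[ (-\ell)\le \frac{d_2 r}{\kappa_2 j_\Gamma^2} \] holds if and only if this problem has a unique solution $(\theta_1,\theta_2,x_* )$. Moreover, the location $x_*=x_*(\theta_{\mathrm{in}},j_\Gamma)$ of the interface is strictly decreasing in $\theta_{\mathrm{in}}$ and strictly increasing in $j_\Gamma$, and $x_*\to\infty$ as $j_\Gamma\to\infty$ (with $\theta_{\mathrm{in}}$ fixed) or as $\theta_{\mathrm{in}}\to-\infty$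 (with $j_\Gamma$ fixed).
   Context: This is the one-dimensional stationary two-phase Stefan problem with drift on the half line $(0,\infty)$: the liquid phase occupies $(0,x_* )$, the vapor phase occupies $(x_*,\infty)$, and the point $x_*$ is called the dryout point. The phase flux is $j_\Gamma=\rho_1u_1$ where $\rho_1>0$ is the liquid density and $u_1>0$ the liquid velocity, and $r=\rho_1r_1=\rho_2r_2$ is the (common) volume specific internal heat source. *)

theory Defs
  imports "HOL-Analysis.Analysis"
begin

text \<open>The stationary two-phase Stefan system WITHOUT the sign constraint
  theta1 <= theta_star.\<close>

definition stefan_system ::
  "real \<Rightarrow> real \<Rightarrow> real \<Rightarrow> real \<Rightarrow> real \<Rightarrow> real \<Rightarrow> real \<Rightarrow> real \<Rightarrow> real \<Rightarrow>
   real \<Rightarrow> (real \<Rightarrow> real) \<Rightarrow> (real \<Rightarrow> real) \<Rightarrow> bool" where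
  "stefan_system k1 k2 d1 d2 l j r ths thin xs th1 th2 \<longleftrightarrow>
     xs > 0 \<and>
     continuous_on {0..xs} th1 \<and>
     continuous_on {xs..} th2 \<and>
     (\<exists>D1 DD1. \<forall>x\<in>{0<..<xs}. (th1 has_real_derivative D1 x) (at x) \<and>
                 (D1 has_real_derivative DD1 x) (at x) \<and>
                 k1 * j * D1 x - d1 * DD1 x = r) \<and>
     (\<exists>D2 DD2. \<forall>x\<in>{xs<..}. (th2 has_real_derivative D2 x) (at x) \<and>
                 (D2 has_real_derivative DD2 x) (at x) \<and>
                 k2 * j * D2 x - d2 * DD2 x = r) \<and>
     th1 xs = ths \<and> th2 xs = ths \<and>
     (\<exists>p1 p2. (th1 has_real_derivative p1) (at xs within {0..xs}) \<and>
              (th2 has_real_derivative p2) (at xs within {xs..}) \<and>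
              l * j + d2 * p2 - d1 * p1 = 0) \<and>
     th1 0 = thin \<and>
     (\<exists>C. \<forall>x\<in>{xs..}. \<bar>th2 x\<bar> \<le> C * (1 + x))"

definition stefan_problem ::
  "real \<Rightarrow> real \<Rightarrow> real \<Rightarrow> real \<Rightarrow> real \<Rightarrow> real \<Rightarrow> real \<Rightarrow> real \<Rightarrow> real \<Rightarrow>
   real \<Rightarrow> (real \<Rightarrow> real) \<Rightarrow> (real \<Rightarrow> real) \<Rightarrow> bool" where
  "stefan_problem k1 k2 d1 d2 l j r ths thin xs th1 th2 \<longleftrightarrow>
     stefan_system k1 k2 d1 d2 l j r ths thin xs th1 th2 \<and>
     (\<forall>x\<in>{0..xs}. th1 x \<le> ths)"

definition stefan_unique_solution ::
  "real \<Rightarrow> real \<Rightarrow> real \<Rightarrow> real \<Rightarrow> real \<Rightarrow> real \<Rightarrow> real \<Rightarrow> real \<Rightarrow> real \<Rightarrow> bool" where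
  "stefan_unique_solution k1 k2 d1 d2 l j r ths thin \<longleftrightarrow>
     (\<exists>xs th1 th2. stefan_problem k1 k2 d1 d2 l j r ths thin xs th1 th2) \<and>
     (\<forall>xs th1 th2 xs' th1' th2'.
        stefan_problem k1 k2 d1 d2 l j r ths thin xs th1 th2 \<and>
        stefan_problem k1 k2 d1 d2 l j r ths thin xs' th1' th2' \<longrightarrow>
        xs = xs' \<and> (\<forall>x\<in>{0..xs}. th1 x = th1' x) \<and> (\<forall>x\<in>{xs..}. th2 x = th2' x))"

end

theory Submission
  imports Defs
begin

lemma ode_closed:
  fixes f D DD :: "real \<Rightarrow> real" and S :: "real set"
  assumes "convex S" "open S" "k > 0" "d > 0"
  and H: "\<forall>x\<in>S. (f has_real_derivative D x) (at x) \<and> (D has_real_derivative DD x) (at x) \<and> k * D x - d * DD x = r"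
  and C: "continuous_on (closure S) f"
  shows "\<exists>K A. \<forall>x\<in>closure S. f x = r/k * x + K * exp (k/d * x) + A"
proof -
  have "\<exists>c. \<forall>x\<in>S. (D x - r/k) * exp (-(k/d)*x) = c"
  proof (rule has_field_derivative_zero_constant[OF assms(1)])
    fix x assume x: "x \<in> S"
    have d1: "(D has_real_derivative DD x) (at x)" and e: "k * D x - d * DD x = r" using H x by auto
    have "((\<lambda>x. (D x - r/k) * exp (-(k/d)*x)) has_real_derivative
        DD x * exp (-(k/d)*x) + (D x - r/k) * (exp (-(k/d)*x) * (-(k/d)))) (at x)"
      using assms(3,4) by (auto intro!: derivative_eq_intros d1)
    moreover have "DD x * exp (-(k/d)*x) + (D x - r/k) * (exp (-(k/d)*x) * (-(k/d))) = 0"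
    proof -
      have "DD x * exp (-(k/d)*x) + (D x - r/k) * (exp (-(k/d)*x) * (-(k/d)))
          = exp (-(k/d)*x) * (d * DD x - (k * D x - r)) / d"
        using assms(3,4) by (simp add: field_simps)
      also have "\<dots> = 0" using e by simp
      finally show ?thesis .
    qed
    ultimately show "((\<lambda>x. (D x - r/k) * exp (-(k/d)*x)) has_field_derivative 0) (at x within S)"
      by (metis has_field_derivative_at_within)
  qed
  then obtain K0 where K0: "\<forall>x\<in>S. (D x - r/k) * exp (-(k/d)*x) = K0" by blast
  have DS: "D x = r/k + K0 * exp (k/d*x)" if "x \<in> S" for x
  proof -
    have e: "exp (-(k/d)*x) * exp (k/d*x) = 1" by (simp add: exp_add[symmetric])
    have "(D x - r/k) = (D x - r/k) * (exp (-(k/d)*x) * exp (k/d*x))" by (simp only: e mult_1_right)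
    also have "\<dots> = ((D x - r/k) * exp (-(k/d)*x)) * exp (k/d*x)" by (simp only: mult.assoc)
    also have "\<dots> = K0 * exp (k/d*x)" using K0 that by simp
    finally have "(D x - r/k) = K0 * exp (k/d*x)" .
    then show ?thesis by simp
  qed
  have "\<exists>c. \<forall>x\<in>S. f x - r/k*x - K0*(d/k)*exp(k/d*x) = c"
  proof (rule has_field_derivative_zero_constant[OF assms(1)])
    fix x assume x: "x \<in> S"
    have d1: "(f has_real_derivative D x) (at x)" using H x by auto
    have "((\<lambda>x. f x - r/k*x - K0*(d/k)*exp(k/d*x)) has_real_derivative
        D x - r/k - K0*(d/k)*(exp(k/d*x) * (k/d))) (at x)"
      using assms(3,4) by (auto intro!: derivative_eq_intros d1)
    moreover have "D x - r/k - K0*(d/k)*(exp(k/d*x) * (k/d)) = 0"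
      using DS[OF x] assms(3,4) by (simp add: field_simps)
    ultimately show "((\<lambda>x. f x - r/k*x - K0*(d/k)*exp(k/d*x)) has_field_derivative 0) (at x within S)"
      by (metis has_field_derivative_at_within)
  qed
  then obtain A where A: "\<forall>x\<in>S. f x - r/k*x - K0*(d/k)*exp(k/d*x) = A" by blast
  have "f x - r/k*x - K0*(d/k)*exp(k/d*x) = A" if "x \<in> closure S" for x
  proof (rule continuous_constant_on_closure[OF _ _ that])
    show "continuous_on (closure S) (\<lambda>x. f x - r/k*x - K0*(d/k)*exp(k/d*x))"
      by (intro continuous_intros C)
  qed (use A in auto)
  then show ?thesis by (intro exI[of _ "K0*(d/k)"] exI[of _ A]) (auto simp: algebra_simps)
qed

lemma deriv_unique_interval:
  fixes f :: "real \<Rightarrow> real"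
  assumes "a < b" "x \<in> {a..b}" "(f has_real_derivative p) (at x within {a..b})"
    "(f has_real_derivative q) (at x within {a..b})"
  shows "p = q"
  using vector_derivative_unique_within_closed_interval[of a b x f p q] assms
  by (simp add: cbox_interval has_real_derivative_iff_has_vector_derivative)

definition FF :: "real \<Rightarrow> real \<Rightarrow> real \<Rightarrow> real \<Rightarrow> real" where
  "FF aa cc pp t = cc*t + (pp - cc)*(1 - exp(-aa*t))/aa"

lemma growth_K0:
  fixes K B C a c xs :: real
  assumes "a > 0" "c > 0"
    and H: "\<forall>x\<in>{xs..}. \<bar>c*x + K*exp(a*x) + B\<bar> \<le> C*(1+x)"
  shows "K = 0"
proof (rule ccontr)
  assume K: "K \<noteq> 0"
  then have Kp: "\<bar>K\<bar> > 0" by simp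
  define N where "N = \<bar>C\<bar> + c + \<bar>B\<bar> + 1"
  have N: "N > 0" using assms by (simp add: N_def add_pos_nonneg)
  define x where "x = max (max xs 1) (8*N/(\<bar>K\<bar>*a^2) + 1)"
  have x1: "x \<ge> 1" "x \<ge> xs" and x3: "x > 8*N/(\<bar>K\<bar>*a^2)" by (auto simp: x_def)
  have xp: "1 + x > 0" using x1 by simp
  have "exp (a*x) = exp (a*x/2)^2" by (simp add: exp_double[symmetric] power2_eq_square exp_add[symmetric])
  moreover have "(1 + a*x/2)^2 \<le> exp (a*x/2)^2"
    using exp_ge_add_one_self[of "a*x/2"] assms x1 by (intro power_mono) auto
  moreover have "a^2*x^2/4 \<le> (1 + a*x/2)^2" using assms x1 by (simp add: power2_eq_square algebra_simps)
  ultimately have ex: "a^2*x^2/4 \<le> exp (a*x)" by linarith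
  have "8*N < x * (\<bar>K\<bar>*a^2)" using x3 Kp assms by (simp add: field_simps)
  then have "2*N*x < \<bar>K\<bar> * (a^2*x^2/4)" using x1 by (simp add: power2_eq_square algebra_simps)
  also have "\<dots> \<le> \<bar>K\<bar> * exp(a*x)" using ex Kp by (intro mult_left_mono) auto
  finally have big: "2*N*x < \<bar>K\<bar> * exp(a*x)" .
  have "N*(1+x) \<le> 2*N*x" using N x1 by (simp add: algebra_simps)
  then have "N * (1+x) < \<bar>K\<bar> * exp(a*x)" using big by linarith
  then have "(\<bar>C\<bar> + c + \<bar>B\<bar> + 1) * (1+x) \<le> \<bar>K\<bar> * exp(a*x)"
    by (simp add: N_def)
  moreover have "\<bar>K\<bar> * exp(a*x) \<le> \<bar>c*x + K*exp(a*x) + B\<bar> + c*x + \<bar>B\<bar>"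
  proof -
    have "\<bar>K*exp(a*x)\<bar> = \<bar>K\<bar> * exp(a*x)" by (simp add: abs_mult)
    moreover have "c*x \<ge> 0" using x1 assms(2) by simp
    ultimately show ?thesis by linarith
  qed
  moreover have "\<bar>c*x + K*exp(a*x) + B\<bar> \<le> C*(1+x)" using H x1 by auto
  moreover have "C*(1+x) \<le> \<bar>C\<bar>*(1+x)" using xp by (simp add: mult_right_mono)
  moreover have "c * x \<le> c * (1+x)" using assms(2) by simp
  moreover have "\<bar>B\<bar> \<le> \<bar>B\<bar> * (1+x)" using x1 by (simp add: mult_le_cancel_left1)
  moreover have "1 + x > 0" by (fact xp)
  ultimately show False by (simp add: algebra_simps)
qed

lemma sys_char:
  fixes k1 k2 d1 d2 l j r ths thin xs :: real
  assumes pos: "k1 > 0" "k2 > 0" "d1 > 0" "d2 > 0" "j > 0" "r > 0"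
    and sys: "stefan_system k1 k2 d1 d2 l j r ths thin xs th1 th2"
  shows "xs > 0 \<and> (\<forall>x\<in>{0..xs}. th1 x = ths - FF (k1*j/d1) (r/(k1*j)) ((l*j + d2*(r/(k2*j)))/d1) (xs - x))
     \<and> (\<forall>x\<in>{xs..}. th2 x = ths + r/(k2*j)*(x - xs))"
proof -
  note S = sys[unfolded stefan_system_def]
  have xs: "xs > 0" using S by blast
  obtain D1 DD1 where H1: "\<forall>x\<in>{0<..<xs}. (th1 has_real_derivative D1 x) (at x) \<and>
                 (D1 has_real_derivative DD1 x) (at x) \<and> k1 * j * D1 x - d1 * DD1 x = r"
    using S by blast
  obtain D2 DD2 where H2: "\<forall>x\<in>{xs<..}. (th2 has_real_derivative D2 x) (at x) \<and>
                 (D2 has_real_derivative DD2 x) (at x) \<and> k2 * j * D2 x - d2 * DD2 x = r"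
    using S by blast
  obtain p1 p2 where P: "(th1 has_real_derivative p1) (at xs within {0..xs})"
     "(th2 has_real_derivative p2) (at xs within {xs..})" "l * j + d2 * p2 - d1 * p1 = 0"
    using S by blast
  obtain C where G: "\<forall>x\<in>{xs..}. \<bar>th2 x\<bar> \<le> C * (1 + x)" using S by blast
  have t1: "th1 xs = ths" and t2: "th2 xs = ths" using S by auto
  have k1j: "k1 * j > 0" "k2 * j > 0" using pos by auto
  obtain K A where KA: "\<forall>x\<in>{0..xs}. th1 x = r/(k1*j) * x + K * exp (k1*j/d1 * x) + A"
    using ode_closed[of "{0<..<xs}" "k1*j" d1 th1 D1 DD1 r] H1 k1j pos xs S by auto
  obtain K2 B where KB: "\<forall>x\<in>{xs..}. th2 x = r/(k2*j) * x + K2 * exp (k2*j/d2 * x) + B"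
    using ode_closed[of "{xs<..}" "k2*j" d2 th2 D2 DD2 r] H2 k1j pos S by auto
  have "K2 = 0"
  proof (rule growth_K0[of "k2*j/d2" "r/(k2*j)" xs K2 B C])
    show "\<forall>x\<in>{xs..}. \<bar>r/(k2*j)*x + K2*exp(k2*j/d2*x) + B\<bar> \<le> C*(1+x)"
      using G KB by auto
  qed (use pos in auto)
  with KB have KB': "\<forall>x\<in>{xs..}. th2 x = r/(k2*j) * x + B" by simp
  have th2f: "\<forall>x\<in>{xs..}. th2 x = ths + r/(k2*j)*(x - xs)"
    using KB' t2 pos by (auto simp: field_simps)
  have "(th2 has_real_derivative r/(k2*j)) (at xs within {xs..xs+1})"
  proof (rule has_field_derivative_transform_within[where d=1 and f="\<lambda>x. ths + r/(k2*j)*(x - xs)"])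
    show "((\<lambda>x. ths + r/(k2*j)*(x - xs)) has_real_derivative r/(k2*j)) (at xs within {xs..xs+1})"
      using pos by (auto intro!: derivative_eq_intros)
  qed (use th2f in auto)
  moreover have "(th2 has_real_derivative p2) (at xs within {xs..xs+1})"
    by (rule DERIV_subset[OF P(2)]) auto
  ultimately have p2: "p2 = r/(k2*j)"
    by (intro deriv_unique_interval[of xs "xs+1" xs th2]) auto
  have "(th1 has_real_derivative r/(k1*j) + K * (exp (k1*j/d1 * xs) * (k1*j/d1))) (at xs within {0..xs})"
  proof (rule has_field_derivative_transform_within[where d=1 and f="\<lambda>x. r/(k1*j) * x + K * exp (k1*j/d1 * x) + A"])
    show "((\<lambda>x. r/(k1*j) * x + K * exp (k1*j/d1 * x) + A) has_real_derivative
        r/(k1*j) + K * (exp (k1*j/d1 * xs) * (k1*j/d1))) (at xs within {0..xs})"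
      using pos by (auto intro!: derivative_eq_intros)
  qed (use KA xs in auto)
  then have p1: "p1 = r/(k1*j) + K * (exp (k1*j/d1 * xs) * (k1*j/d1))"
    by (intro deriv_unique_interval[OF xs _ P(1)]) (use xs in auto)
  have p1': "p1 = (l*j + d2*(r/(k2*j)))/d1" using P(3) p2 pos by (simp add: field_simps)
  have th1f: "th1 x = ths - FF (k1*j/d1) (r/(k1*j)) p1 (xs - x)" if x: "x \<in> {0..xs}" for x
  proof -
    define a where "a = k1*j/d1"
    define c where "c = r/(k1*j)"
    have a: "a > 0" using pos by (simp add: a_def)
    have e: "exp (a * xs) * exp (- a * (xs - x)) = exp (a * x)"
      by (simp add: exp_add[symmetric] algebra_simps)
    have 1: "th1 x = c * x + K * exp (a * x) + A" using KA x by (simp add: a_def c_def)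
    have 2: "ths = c * xs + K * exp (a * xs) + A" using KA t1 xs by (simp add: a_def c_def)
    have 3: "FF a c p1 (xs - x) = c * (xs - x) + K * (exp (a * xs) - exp (a * x))"
      unfolding FF_def p1 a_def[symmetric] c_def[symmetric] using a e[symmetric]
      by (simp add: field_simps)
    have "th1 x = ths - FF a c p1 (xs - x)" unfolding 1 2 3 by (simp add: algebra_simps)
    then show ?thesis by (simp add: a_def c_def)
  qed
  show ?thesis using xs th1f th2f p1' by auto
qed

lemma FF_deriv:
  assumes "a > 0"
  shows "(FF a c p has_real_derivative c + (p - c) * exp (-a*t)) (at t)"
proof -
  have "(FF a c p has_real_derivative c + (p - c) * (-(exp (-a*t) * (-a))) / a) (at t)"
    unfolding FF_def[abs_def] by (auto intro!: derivative_eq_intros)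
  then show ?thesis using assms by simp
qed

lemma FF_0[simp]: "FF a c p 0 = 0" by (simp add: FF_def)

lemma one_minus_exp_le: fixes a t :: real shows "a > 0 \<Longrightarrow> t \<ge> 0 \<Longrightarrow> (1 - exp(-a*t))/a \<le> t"
  using exp_ge_add_one_self[of "-a*t"] by (simp add: field_simps)

lemma one_minus_exp_ge: fixes a t :: real shows "a > 0 \<Longrightarrow> t \<ge> 0 \<Longrightarrow> 0 \<le> (1 - exp(-a*t))/a"
  by (intro divide_nonneg_pos) auto

lemma FF_nonneg:
  assumes "a > 0" "c > 0" "p \<ge> 0" "t \<ge> 0"
  shows "FF a c p t \<ge> 0"
proof -
  have "FF a c p t = c * (t - (1 - exp(-a*t))/a) + p * ((1 - exp(-a*t))/a)"
    unfolding FF_def using assms by (simp add: field_simps)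
  moreover have "t - (1 - exp(-a*t))/a \<ge> 0" using one_minus_exp_le[OF assms(1,4)] by simp
  moreover have "(1 - exp(-a*t))/a \<ge> 0" using one_minus_exp_ge[OF assms(1,4)] .
  ultimately show ?thesis using assms by simp
qed

lemma FF_upper:
  assumes "a > 0" "t \<ge> 0"
  shows "FF a c p t \<le> c * t + \<bar>p - c\<bar> * t"
proof -
  have "(p - c) * ((1 - exp(-a*t))/a) \<le> \<bar>p - c\<bar> * t"
  proof -
    have "(p - c) * ((1 - exp(-a*t))/a) \<le> \<bar>p - c\<bar> * ((1 - exp(-a*t))/a)"
      using one_minus_exp_ge[OF assms] by (intro mult_right_mono) auto
    also have "\<dots> \<le> \<bar>p - c\<bar> * t" using one_minus_exp_le[OF assms] by (intro mult_left_mono) auto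
    finally show ?thesis .
  qed
  then show ?thesis unfolding FF_def by simp
qed

lemma FF_lower:
  assumes "a > 0" "t \<ge> 0"
  shows "FF a c p t \<ge> c * t - \<bar>p - c\<bar> / a"
proof -
  have "(p - c) * (1 - exp(-a*t)) \<ge> - \<bar>p - c\<bar>"
  proof -
    have "0 \<le> 1 - exp(-a*t)" "1 - exp(-a*t) \<le> 1" using assms by auto
    then have "(p - c) * (1 - exp(-a*t)) \<ge> - \<bar>p - c\<bar> * (1 - exp(-a*t))"
      by (intro mult_right_mono) auto
    moreover have "\<bar>p - c\<bar> * (1 - exp(-a*t)) \<le> \<bar>p - c\<bar>"
      using \<open>1 - exp(-a*t) \<le> 1\<close> by (intro mult_left_le) auto
    ultimately show ?thesis by linarith
  qed
  then have "(p - c) * (1 - exp(-a*t)) / a \<ge> - \<bar>p - c\<bar> / a"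
    using assms(1) by (metis divide_right_mono less_imp_le minus_divide_left)
  then show ?thesis unfolding FF_def by simp
qed

lemma FF_mono:
  assumes a: "a > 0" and c: "c > 0" and s: "0 < s" "s < s'" and pos: "FF a c p s > 0"
  shows "FF a c p s < FF a c p s'"
proof (rule DERIV_pos_imp_increasing[OF s(2)])
  fix x assume x: "s \<le> x" "x \<le> s'"
  have "c + (p - c) * exp (-a*x) > 0"
  proof (cases "p \<ge> c")
    case True then show ?thesis using c by (simp add: add_pos_nonneg)
  next
    case False
    define u where "u = exp (-a* s)"
    have u: "u > 0" "u * exp (a* s) = 1" by (auto simp: u_def exp_minus_inverse[symmetric] exp_add[symmetric])
    have "1 + a* s \<le> exp (a* s)" by (rule exp_ge_add_one_self)
    then have ule: "u * (1 + a* s) \<le> 1" using u by (metis mult_left_mono less_imp_le)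
    have "s * (c + (p - c) * u) - FF a c p s = (p - c) * (a* s*u - 1 + u) / a"
      unfolding FF_def u_def using a by (simp add: field_simps)
    also have "\<dots> \<ge> 0" using False ule a
      by (intro divide_nonneg_pos mult_nonpos_nonpos) (auto simp: algebra_simps)
    finally have "s * (c + (p - c) * u) > 0" using pos by linarith
    then have "c + (p - c) * u > 0" using s by (simp add: zero_less_mult_iff)
    moreover have "exp (-a*x) \<le> u" unfolding u_def using a x by simp
    ultimately show ?thesis using False
      by (smt (verit, best) mult_left_mono_neg)
  qed
  then show "\<exists>y. DERIV (FF a c p) x :> y \<and> y > 0" using FF_deriv[OF a] by blast
qed

lemma FF_neg:
  assumes a: "a > 0" and p: "p < 0"
  shows "\<exists>d>0. \<forall>h>0. h < d \<longrightarrow> FF a c p h < 0"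
proof -
  have "DERIV (FF a c p) 0 :> p" using FF_deriv[OF a, of c p 0] by simp
  from DERIV_neg_dec_right[OF this p] show ?thesis by simp
qed

lemma FF_cont: "a > 0 \<Longrightarrow> continuous_on S (FF a c p)"
  unfolding FF_def[abs_def] by (intro continuous_intros) auto

lemma sys_construct:
  fixes k1 k2 d1 d2 l j r ths thin xs :: real
  assumes pos: "k1 > 0" "k2 > 0" "d1 > 0" "d2 > 0" "j > 0" "r > 0"
    and xs: "xs > 0"
    and F: "FF (k1*j/d1) (r/(k1*j)) ((l*j + d2*(r/(k2*j)))/d1) xs = ths - thin"
  shows "stefan_system k1 k2 d1 d2 l j r ths thin xs
     (\<lambda>x. ths - FF (k1*j/d1) (r/(k1*j)) ((l*j + d2*(r/(k2*j)))/d1) (xs - x))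
     (\<lambda>x. ths + r/(k2*j)*(x - xs))"
proof -
  define a where "a = k1*j/d1"
  define c where "c = r/(k1*j)"
  define p where "p = (l*j + d2*(r/(k2*j)))/d1"
  have a: "a > 0" using pos by (simp add: a_def)
  define D1 where "D1 = (\<lambda>x. c + (p - c) * exp (-a*(xs - x)))"
  define DD1 where "DD1 = (\<lambda>x. (p - c) * exp (-a*(xs - x)) * a)"
  have dth1: "((\<lambda>x. ths - FF a c p (xs - x)) has_real_derivative D1 x) (at x)" for x
  proof -
    have "((\<lambda>x. ths - FF a c p (xs - x)) has_real_derivative -((c + (p - c) * exp (-a*(xs - x))) * (0 - 1))) (at x)"
      by (rule derivative_eq_intros DERIV_chain2[OF FF_deriv[OF a]] refl | simp)+
    then show ?thesis by (simp add: D1_def add.commute)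
  qed
  have dD1: "(D1 has_real_derivative DD1 x) (at x)" for x
  proof -
    have "(D1 has_real_derivative (p - c) * (exp (-a*(xs - x)) * (-a * (0 - 1)))) (at x)"
      unfolding D1_def by (auto intro!: derivative_eq_intros)
    then show ?thesis by (simp add: DD1_def mult.assoc)
  qed
  have ode1: "k1 * j * D1 x - d1 * DD1 x = r" for x
  proof -
    have "k1 * j * D1 x - d1 * DD1 x = k1 * j * c + (p - c) * exp (-a*(xs - x)) * (k1 * j - d1 * a)"
      by (simp add: D1_def DD1_def algebra_simps)
    also have "\<dots> = r" using pos by (simp add: a_def c_def)
    finally show ?thesis .
  qed
  have "stefan_system k1 k2 d1 d2 l j r ths thin xs
     (\<lambda>x. ths - FF a c p (xs - x)) (\<lambda>x. ths + r/(k2*j)*(x - xs))"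
    unfolding stefan_system_def
  proof (intro conjI)
    show "0 < xs" by (fact xs)
    show "continuous_on {0..xs} (\<lambda>x. ths - FF a c p (xs - x))"
      using a by (auto intro!: continuous_intros continuous_on_compose2[OF FF_cont[OF a]])
    show "continuous_on {xs..} (\<lambda>x. ths + r / (k2 * j) * (x - xs))"
      by (intro continuous_intros)
    show "\<exists>D1 DD1. \<forall>x\<in>{0<..<xs}. ((\<lambda>x. ths - FF a c p (xs - x)) has_real_derivative D1 x) (at x) \<and>
                 (D1 has_real_derivative DD1 x) (at x) \<and> k1 * j * D1 x - d1 * DD1 x = r"
      using dth1 dD1 ode1 by blast
    show "\<exists>D2 DD2. \<forall>x\<in>{xs<..}. ((\<lambda>x. ths + r/(k2*j)*(x - xs)) has_real_derivative D2 x) (at x) \<and>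
                 (D2 has_real_derivative DD2 x) (at x) \<and> k2 * j * D2 x - d2 * DD2 x = r"
      by (rule exI[of _ "\<lambda>x. r/(k2*j)"], rule exI[of _ "\<lambda>x. 0"])
        (use pos in \<open>auto intro!: derivative_eq_intros\<close>)
    show "ths - FF a c p (xs - xs) = ths" by simp
    show "ths + r/(k2*j)*(xs - xs) = ths" by simp
    show "\<exists>p1 p2. ((\<lambda>x. ths - FF a c p (xs - x)) has_real_derivative p1) (at xs within {0..xs}) \<and>
              ((\<lambda>x. ths + r/(k2*j)*(x - xs)) has_real_derivative p2) (at xs within {xs..}) \<and>
              l * j + d2 * p2 - d1 * p1 = 0"
    proof (intro exI conjI)
      show "((\<lambda>x. ths - FF a c p (xs - x)) has_real_derivative D1 xs) (at xs within {0..xs})"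
        using dth1 by (rule has_field_derivative_at_within)
      show "((\<lambda>x. ths + r/(k2*j)*(x - xs)) has_real_derivative r/(k2*j)) (at xs within {xs..})"
        using pos by (auto intro!: derivative_eq_intros)
      show "l * j + d2 * (r/(k2*j)) - d1 * D1 xs = 0"
        using pos by (simp add: D1_def p_def)
    qed
    show "ths - FF a c p (xs - 0) = thin" using F by (simp add: a_def c_def p_def)
    show "\<exists>C. \<forall>x\<in>{xs..}. \<bar>ths + r/(k2*j)*(x - xs)\<bar> \<le> C * (1 + x)"
    proof (intro exI ballI)
      fix x assume x: "x \<in> {xs..}"
      have c2: "r/(k2*j) > 0" using pos by simp
      have "\<bar>ths + r/(k2*j)*(x - xs)\<bar> \<le> \<bar>ths\<bar> + r/(k2*j)*x"
      proof -
        have "0 \<le> r/(k2*j)*(x - xs)" using x c2 by (intro mult_nonneg_nonneg) auto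
        moreover have "r/(k2*j)*(x - xs) \<le> r/(k2*j)*x" using xs c2 by (intro mult_left_mono) auto
        moreover have gen: "\<And>t y z :: real. 0 \<le> y \<Longrightarrow> y \<le> z \<Longrightarrow> \<bar>t + y\<bar> \<le> \<bar>t\<bar> + z" by arith
        ultimately show ?thesis by blast
      qed
      also have "\<dots> \<le> (\<bar>ths\<bar> + r/(k2*j)) * (1 + x)"
      proof -
        have "(\<bar>ths\<bar> + r/(k2*j)) * (1 + x) = \<bar>ths\<bar> + r/(k2*j)*x + (\<bar>ths\<bar> * x + r/(k2*j))"
          by (simp add: algebra_simps add_divide_distrib)
        moreover have "0 \<le> \<bar>ths\<bar> * x" using x xs by simp
        ultimately show ?thesis using c2 by linarith
      qed
      finally show "\<bar>ths + r/(k2*j)*(x - xs)\<bar> \<le> (\<bar>ths\<bar> + r/(k2*j)) * (1 + x)" .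
    qed
  qed
  then show ?thesis by (simp add: a_def c_def p_def)
qed

lemma g1_nonneg:
  fixes x :: real assumes "x \<ge> 0" shows "0 \<le> 1 - (1 - x) * exp x"
proof -
  have "(\<lambda>x. 1 - (1 - x) * exp x) 0 \<le> (\<lambda>x. 1 - (1 - x) * exp x) x"
  proof (rule DERIV_nonneg_imp_nondecreasing[OF assms])
    fix z :: real assume z: "0 \<le> z" "z \<le> x"
    have "((\<lambda>x. 1 - (1 - x) * exp x) has_real_derivative -((0 - 1) * exp z + (1 - z) * exp z)) (at z)"
      by (auto intro!: derivative_eq_intros)
    moreover have "-((0 - 1) * exp z + (1 - z) * exp z) = z * exp z" by (simp add: algebra_simps)
    ultimately show "\<exists>y. DERIV (\<lambda>x. 1 - (1 - x) * exp x) z :> y \<and> y \<ge> 0"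
      using z by (intro exI[of _ "z * exp z"]) auto
  qed
  then show ?thesis by simp
qed

lemma g_nonneg:
  fixes x :: real assumes "x \<ge> 0" shows "0 \<le> 2 + x - (2 - x) * exp x"
proof -
  have "(\<lambda>x. 2 + x - (2 - x) * exp x) 0 \<le> (\<lambda>x. 2 + x - (2 - x) * exp x) x"
  proof (rule DERIV_nonneg_imp_nondecreasing[OF assms])
    fix z :: real assume z: "0 \<le> z" "z \<le> x"
    have d: "((\<lambda>x. 2 + x - (2 - x) * exp x) has_real_derivative 1 - ((0 - 1) * exp z + (2 - z) * exp z)) (at z)"
      by (rule DERIV_cong, (rule derivative_eq_intros refl)+) (simp add: algebra_simps)
    have eq: "1 - ((0 - 1) * exp z + (2 - z) * exp z) = 1 - (1 - z) * exp z" by (simp add: algebra_simps)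
    have nn: "1 - (1 - z) * exp z \<ge> 0" using g1_nonneg[of z] z by simp
    show "\<exists>y. DERIV (\<lambda>x. 2 + x - (2 - x) * exp x) z :> y \<and> y \<ge> 0"
      using d[unfolded eq] nn by blast
  qed
  then show ?thesis by simp
qed

lemma h_anti:
  fixes x y :: real assumes "0 < x" "x \<le> y"
  shows "(y - 1 + exp(-y))/y^2 \<le> (x - 1 + exp(-x))/x^2"
proof (rule DERIV_nonpos_imp_nonincreasing[OF assms(2)])
  fix z :: real assume z: "x \<le> z" "z \<le> y"
  have zp: "z > 0" using z assms by simp
  have d: "((\<lambda>z. (z - 1 + exp(-z))/z^2) has_real_derivative
      ((1 + exp(-z) * (-1)) * z^2 - (z - 1 + exp(-z)) * (2 * z)) / (z^2 * z^2)) (at z)"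
    using zp by (auto intro!: derivative_eq_intros simp: power2_eq_square)
  have eq: "((1 + exp(-z) * (-1)) * z^2 - (z - 1 + exp(-z)) * (2 * z)) = - z * exp(-z) * (2 + z - (2 - z) * exp z)"
    by (simp add: algebra_simps power2_eq_square exp_minus_inverse)
  have "- z * exp(-z) * (2 + z - (2 - z) * exp z) \<le> 0"
    using zp g_nonneg[of z] by (simp add: mult_nonneg_nonneg)
  then have nn: "- z * exp(-z) * (2 + z - (2 - z) * exp z) / (z^2 * z^2) \<le> 0"
    by (rule divide_nonpos_nonneg) simp
  show "\<exists>y. DERIV (\<lambda>z. (z - 1 + exp(-z))/z^2) z :> y \<and> y \<le> 0"
    using d[unfolded eq] nn by blast
qed

lemma q_anti:
  fixes x y :: real assumes "0 < x" "x \<le> y"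
  shows "(1 - exp(-y))/y^2 \<le> (1 - exp(-x))/x^2"
proof (rule DERIV_nonpos_imp_nonincreasing[OF assms(2)])
  fix z :: real assume z: "x \<le> z" "z \<le> y"
  have zp: "z > 0" using z assms by simp
  have d: "((\<lambda>z. (1 - exp(-z))/z^2) has_real_derivative
      ((- (exp(-z) * (-1))) * z^2 - (1 - exp(-z)) * (2 * z)) / (z^2 * z^2)) (at z)"
    using zp by (auto intro!: derivative_eq_intros simp: power2_eq_square)
  have eq: "((- (exp(-z) * (-1))) * z^2 - (1 - exp(-z)) * (2 * z)) = z * exp(-z) * (z + 2 - 2 * exp z)"
    by (simp add: algebra_simps power2_eq_square exp_minus_inverse)
  have "z * exp(-z) * (z + 2 - 2 * exp z) \<le> 0"
  proof -
    have "1 + z \<le> exp z" by (rule exp_ge_add_one_self)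
    then have "z + 2 - 2 * exp z \<le> 0" using zp by linarith
    then show ?thesis using zp by (simp add: mult_nonneg_nonpos)
  qed
  then have nn: "z * exp(-z) * (z + 2 - 2 * exp z) / (z^2 * z^2) \<le> 0"
    by (rule divide_nonpos_nonneg) simp
  show "\<exists>y. DERIV (\<lambda>z. (1 - exp(-z))/z^2) z :> y \<and> y \<le> 0"
    using d[unfolded eq] nn by blast
qed

lemma FF_ident:
  fixes k1 k2 d1 d2 l j r s :: real
  assumes pos: "k1 > 0" "k2 > 0" "d1 > 0" "d2 > 0" "j > 0" "s > 0"
  defines "x \<equiv> k1*j* s/d1"
  shows "FF (k1*j/d1) (r/(k1*j)) ((l*j + d2*(r/(k2*j)))/d1) s =
     (r* s^2/d1) * ((x - 1 + exp(-x))/x^2) + (l/k1) * (1 - exp(-x)) + (d2*r*k1* s^2/(k2*d1^2)) * ((1 - exp(-x))/x^2)"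
proof -
  have e: "exp (-(k1*j/d1) * s) = exp (-x)" unfolding x_def by simp
  define E where "E = exp (-x)"
  have "FF (k1*j/d1) (r/(k1*j)) ((l*j + d2*(r/(k2*j)))/d1) s =
     r/(k1*j)* s + ((l*j + d2*(r/(k2*j)))/d1 - r/(k1*j))*(1 - E)/(k1*j/d1)"
    unfolding FF_def e E_def ..
  also have "\<dots> = (r* s^2/d1) * ((x - 1 + E)/x^2) + (l/k1) * (1 - E) + (d2*r*k1* s^2/(k2*d1^2)) * ((1 - E)/x^2)"
    unfolding x_def using pos by (simp add: field_simps power2_eq_square)
  finally show ?thesis by (simp add: E_def)
qed

lemma FF_j_mono:
  fixes k1 k2 d1 d2 l j j' r s :: real
  assumes pos: "k1 > 0" "k2 > 0" "d1 > 0" "d2 > 0" "j > 0" "s > 0" "r > 0" "l < 0" and jj: "j < j'"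
  shows "FF (k1*j'/d1) (r/(k1*j')) ((l*j' + d2*(r/(k2*j')))/d1) s <
         FF (k1*j/d1) (r/(k1*j)) ((l*j + d2*(r/(k2*j)))/d1) s"
proof -
  define x where "x = k1*j* s/d1"
  define y where "y = k1*j'* s/d1"
  have xp: "x > 0" using pos by (simp add: x_def)
  have xy: "x < y" unfolding x_def y_def using pos jj by (simp add: divide_strict_right_mono)
  have I1: "FF (k1*j/d1) (r/(k1*j)) ((l*j + d2*(r/(k2*j)))/d1) s =
     (r* s^2/d1) * ((x - 1 + exp(-x))/x^2) + (l/k1) * (1 - exp(-x)) + (d2*r*k1* s^2/(k2*d1^2)) * ((1 - exp(-x))/x^2)"
    unfolding x_def by (rule FF_ident) (use pos in auto)
  have I2: "FF (k1*j'/d1) (r/(k1*j')) ((l*j' + d2*(r/(k2*j')))/d1) s =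
     (r* s^2/d1) * ((y - 1 + exp(-y))/y^2) + (l/k1) * (1 - exp(-y)) + (d2*r*k1* s^2/(k2*d1^2)) * ((1 - exp(-y))/y^2)"
    unfolding y_def by (rule FF_ident) (use pos jj in auto)
  have A: "(r* s^2/d1) * ((y - 1 + exp(-y))/y^2) \<le> (r* s^2/d1) * ((x - 1 + exp(-x))/x^2)"
    using h_anti[OF xp less_imp_le[OF xy]] pos by (intro mult_left_mono) auto
  have B: "(d2*r*k1* s^2/(k2*d1^2)) * ((1 - exp(-y))/y^2) \<le> (d2*r*k1* s^2/(k2*d1^2)) * ((1 - exp(-x))/x^2)"
    using q_anti[OF xp less_imp_le[OF xy]] pos by (intro mult_left_mono) auto
  have C: "(l/k1) * (1 - exp(-y)) < (l/k1) * (1 - exp(-x))"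
  proof -
    have "exp(-y) < exp(-x)" using xy by simp
    moreover have "l/k1 < 0" using pos by (simp add: divide_neg_pos)
    ultimately have "(l/k1) * (exp(-x) - exp(-y)) < 0" by (intro mult_neg_pos) auto
    moreover have "(l/k1) * (1 - exp(-y)) - (l/k1) * (1 - exp(-x)) = (l/k1) * (exp(-x) - exp(-y))"
      by (simp add: algebra_simps)
    ultimately show ?thesis by linarith
  qed
  show ?thesis unfolding I1 I2 using A B C by linarith
qed

definition Fj :: "real \<Rightarrow> real \<Rightarrow> real \<Rightarrow> real \<Rightarrow> real \<Rightarrow> real \<Rightarrow> real \<Rightarrow> real \<Rightarrow> real" where
  "Fj k1 k2 d1 d2 l r j = FF (k1*j/d1) (r/(k1*j)) ((l*j + d2*(r/(k2*j)))/d1)"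

lemma sys_val:
  fixes k1 k2 d1 d2 l j r ths thin xs :: real
  assumes pos: "k1 > 0" "k2 > 0" "d1 > 0" "d2 > 0" "j > 0" "r > 0"
    and sys: "stefan_system k1 k2 d1 d2 l j r ths thin xs th1 th2"
  shows "xs > 0" "Fj k1 k2 d1 d2 l r j xs = ths - thin"
    "\<forall>x\<in>{0..xs}. th1 x = ths - Fj k1 k2 d1 d2 l r j (xs - x)"
    "\<forall>x\<in>{xs..}. th2 x = ths + r/(k2*j)*(x - xs)"
proof -
  note C = sys_char[OF pos sys, folded Fj_def]
  show "xs > 0" using C by blast
  show "\<forall>x\<in>{0..xs}. th1 x = ths - Fj k1 k2 d1 d2 l r j (xs - x)"
    "\<forall>x\<in>{xs..}. th2 x = ths + r/(k2*j)*(x - xs)" using C by blast+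
  have "th1 0 = thin" using sys unfolding stefan_system_def by blast
  moreover have "th1 0 = ths - Fj k1 k2 d1 d2 l r j (xs - 0)" using C by auto
  ultimately show "Fj k1 k2 d1 d2 l r j xs = ths - thin" by simp
qed

lemma Fj_mono:
  assumes pos: "k1 > 0" "d1 > 0" "j > 0" "r > 0" and "0 < s" "s < s'" "Fj k1 k2 d1 d2 l r j s > 0"
  shows "Fj k1 k2 d1 d2 l r j s < Fj k1 k2 d1 d2 l r j s'"
  using assms unfolding Fj_def by (intro FF_mono) auto

lemma Fj_inj:
  assumes pos: "k1 > 0" "d1 > 0" "j > 0" "r > 0" and "0 < s" "0 < s'"
    "Fj k1 k2 d1 d2 l r j s = v" "Fj k1 k2 d1 d2 l r j s' = v" "v > 0"
  shows "s = s'"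
proof (rule ccontr)
  assume "s \<noteq> s'"
  then consider "s < s'" | "s' < s" by linarith
  then show False
  proof cases
    case 1 then show False using Fj_mono[OF pos \<open>0 < s\<close> 1, of k2 d2 l] assms by simp
  next
    case 2 then show False using Fj_mono[OF pos \<open>0 < s'\<close> 2, of k2 d2 l] assms by simp
  qed
qed

lemma Fj_upper_j:
  fixes k1 k2 d1 d2 l j r s :: real
  assumes pos: "k1 > 0" "k2 > 0" "d1 > 0" "d2 > 0" "j > 0" "s > 0" "r > 0" "l < 0"
  shows "Fj k1 k2 d1 d2 l r j s \<le> r* s/(k1*j) + d2*r/(k1*k2*j^2)"
proof -
  define x where "x = k1*j* s/d1"
  have xp: "x > 0" using pos by (simp add: x_def)
  have I: "Fj k1 k2 d1 d2 l r j s =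
     (r* s^2/d1) * ((x - 1 + exp(-x))/x^2) + (l/k1) * (1 - exp(-x)) + (d2*r*k1* s^2/(k2*d1^2)) * ((1 - exp(-x))/x^2)"
    unfolding Fj_def x_def by (rule FF_ident) (use pos in auto)
  have A: "(r* s^2/d1) * ((x - 1 + exp(-x))/x^2) \<le> (r* s^2/d1) * (x/x^2)"
    using pos xp by (intro mult_left_mono divide_right_mono) auto
  have A': "(r* s^2/d1) * (x/x^2) = r* s/(k1*j)" unfolding x_def using pos by (simp add: field_simps power2_eq_square)
  have B: "(l/k1) * (1 - exp(-x)) \<le> 0"
  proof (rule mult_nonpos_nonneg)
    show "l/k1 \<le> 0" using pos by (simp add: divide_nonpos_pos)
    show "0 \<le> 1 - exp(-x)" using xp by simp
  qed
  have C: "(d2*r*k1* s^2/(k2*d1^2)) * ((1 - exp(-x))/x^2) \<le> (d2*r*k1* s^2/(k2*d1^2)) * (1/x^2)"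
    using pos xp by (intro mult_left_mono divide_right_mono) auto
  have C': "(d2*r*k1* s^2/(k2*d1^2)) * (1/x^2) = d2*r/(k1*k2*j^2)" unfolding x_def using pos by (simp add: field_simps power2_eq_square)
  show ?thesis unfolding I using A A' B C C' by linarith
qed

lemma part1:
  fixes k1 k2 d1 d2 l r ths j thin :: real
  assumes pos: "k1 > 0" "k2 > 0" "d1 > 0" "d2 > 0" "l < 0" "r > 0" and j: "j > 0" and th: "thin < ths"
  shows "(- l) \<le> d2 * r / (k2 * j\<^sup>2) \<longleftrightarrow> stefan_unique_solution k1 k2 d1 d2 l j r ths thin"
proof -
  define a where "a = k1*j/d1"
  define c where "c = r/(k1*j)"
  define p where "p = (l*j + d2*(r/(k2*j)))/d1"
  have a: "a > 0" and c: "c > 0" using pos j by (auto simp: a_def c_def)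
  have F: "Fj k1 k2 d1 d2 l r j = FF a c p" by (simp add: Fj_def a_def c_def p_def)
  define f where "f = k2*j^2/(d1*k2*j)"
  define q where "q = l + d2*r/(k2*j^2)"
  have pf: "p = f * q" unfolding p_def f_def q_def using pos j
    by (simp add: field_simps power2_eq_square)
  have f: "f > 0" using pos j by (simp add: f_def)
  have "0 \<le> f * q \<longleftrightarrow> 0 \<le> q" using f by (simp add: zero_le_mult_iff)
  then have cond: "(- l) \<le> d2 * r / (k2 * j\<^sup>2) \<longleftrightarrow> p \<ge> 0"
    unfolding pf q_def by linarith
  have v: "ths - thin > 0" using th by simp
  show ?thesis unfolding cond
  proof
    assume p: "p \<ge> 0"
    define T where "T = (ths - thin + \<bar>p - c\<bar>/a)/c"
    have T: "T \<ge> 0" using v a c by (simp add: T_def)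
    have "FF a c p T \<ge> c * T - \<bar>p - c\<bar>/a" by (rule FF_lower[OF a T])
    also have "c * T - \<bar>p - c\<bar>/a = ths - thin" using c by (simp add: T_def)
    finally have FT: "FF a c p T \<ge> ths - thin" .
    obtain xs where xs: "0 \<le> xs" "xs \<le> T" "FF a c p xs = ths - thin"
      using IVT'[of "FF a c p" 0 "ths - thin" T] FT v T FF_cont[OF a] by auto
    have xsp: "xs > 0" using xs v by (cases "xs = 0") auto
    have sys: "stefan_system k1 k2 d1 d2 l j r ths thin xs
       (\<lambda>x. ths - FF a c p (xs - x)) (\<lambda>x. ths + r/(k2*j)*(x - xs))"
      using sys_construct[OF pos(1-4) j pos(6) xsp, of l ths thin] xs(3)
      by (simp add: a_def c_def p_def)
    have prob: "stefan_problem k1 k2 d1 d2 l j r ths thin xs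
       (\<lambda>x. ths - FF a c p (xs - x)) (\<lambda>x. ths + r/(k2*j)*(x - xs))"
      unfolding stefan_problem_def using sys FF_nonneg[OF a c p] by auto
    show "stefan_unique_solution k1 k2 d1 d2 l j r ths thin"
      unfolding stefan_unique_solution_def
    proof (rule conjI)
      show "\<exists>xs th1 th2. stefan_problem k1 k2 d1 d2 l j r ths thin xs th1 th2" using prob by blast
    next
      show "\<forall>xs th1 th2 xs' th1' th2'.
        stefan_problem k1 k2 d1 d2 l j r ths thin xs th1 th2 \<and>
        stefan_problem k1 k2 d1 d2 l j r ths thin xs' th1' th2' \<longrightarrow>
        xs = xs' \<and> (\<forall>x\<in>{0..xs}. th1 x = th1' x) \<and> (\<forall>x\<in>{xs..}. th2 x = th2' x)"
      proof (intro allI impI)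
      fix xs th1 th2 xs' th1' th2'
      assume "stefan_problem k1 k2 d1 d2 l j r ths thin xs th1 th2 \<and>
        stefan_problem k1 k2 d1 d2 l j r ths thin xs' th1' th2'"
      then have s1: "stefan_system k1 k2 d1 d2 l j r ths thin xs th1 th2"
        and s2: "stefan_system k1 k2 d1 d2 l j r ths thin xs' th1' th2'"
        unfolding stefan_problem_def by auto
      note V1 = sys_val[OF pos(1-4) j pos(6) s1] and V2 = sys_val[OF pos(1-4) j pos(6) s2]
      have "xs = xs'" using Fj_inj[OF pos(1,3) j pos(6) V1(1) V2(1) V1(2) V2(2) v] .
      then show "xs = xs' \<and> (\<forall>x\<in>{0..xs}. th1 x = th1' x) \<and> (\<forall>x\<in>{xs..}. th2 x = th2' x)"
        using V1(3,4) V2(3,4) by auto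
      qed
    qed
  next
    assume U: "stefan_unique_solution k1 k2 d1 d2 l j r ths thin"
    then obtain xs th1 th2 where P: "stefan_problem k1 k2 d1 d2 l j r ths thin xs th1 th2"
      unfolding stefan_unique_solution_def by blast
    then have s1: "stefan_system k1 k2 d1 d2 l j r ths thin xs th1 th2"
      and le: "\<forall>x\<in>{0..xs}. th1 x \<le> ths" unfolding stefan_problem_def by auto
    note V1 = sys_val[OF pos(1-4) j pos(6) s1]
    show "p \<ge> 0"
    proof (rule ccontr)
      assume "\<not> p \<ge> 0"
      then have "p < 0" by simp
      from FF_neg[OF a this, of c] obtain d where d: "d > 0" "\<forall>h>0. h < d \<longrightarrow> FF a c p h < 0" by blast
      define h where "h = min (d/2) xs"
      have h: "h > 0" "h < d" "h \<le> xs" using d V1(1) by (auto simp: h_def)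
      have "xs - h \<in> {0..xs}" using h by auto
      then have "th1 (xs - h) = ths - FF a c p h" using V1(3) F by auto
      moreover have "FF a c p h < 0" using d h by auto
      moreover have "th1 (xs - h) \<le> ths" using le \<open>xs - h \<in> {0..xs}\<close> by auto
      ultimately show False by simp
    qed
  qed
qed

lemma part2:
  fixes k1 k2 d1 d2 l r ths :: real
  assumes pos: "k1 > 0" "k2 > 0" "d1 > 0" "d2 > 0" "l < 0" "r > 0"
    and j: "j > 0" and t: "thin < thin'" "thin' < ths"
    and s1: "stefan_system k1 k2 d1 d2 l j r ths thin xs th1 th2"
    and s2: "stefan_system k1 k2 d1 d2 l j r ths thin' xs' th1' th2'"
  shows "xs' < xs"
proof (rule ccontr)
  assume "\<not> xs' < xs"
  then have le: "xs \<le> xs'" by simp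
  note V1 = sys_val[OF pos(1-4) j pos(6) s1] and V2 = sys_val[OF pos(1-4) j pos(6) s2]
  show False
  proof (cases "xs = xs'")
    case True then show False using V1(2) V2(2) t by simp
  next
    case False
    then have "xs < xs'" using le by simp
    from Fj_mono[OF pos(1,3) j pos(6) V1(1) this, of k2 d2 l] V1(2) V2(2) t show False by simp
  qed
qed

lemma part3:
  fixes k1 k2 d1 d2 l r ths :: real
  assumes pos: "k1 > 0" "k2 > 0" "d1 > 0" "d2 > 0" "l < 0" "r > 0"
    and j: "0 < j" "j < j'" and t: "thin < ths"
    and s1: "stefan_system k1 k2 d1 d2 l j r ths thin xs th1 th2"
    and s2: "stefan_system k1 k2 d1 d2 l j' r ths thin xs' th1' th2'"
  shows "xs < xs'"
proof (rule ccontr)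
  assume "\<not> xs < xs'"
  then have le: "xs' \<le> xs" by simp
  have j': "j' > 0" using j by simp
  note V1 = sys_val[OF pos(1-4) j(1) pos(6) s1] and V2 = sys_val[OF pos(1-4) j' pos(6) s2]
  have lt: "Fj k1 k2 d1 d2 l r j' xs < Fj k1 k2 d1 d2 l r j xs"
    unfolding Fj_def by (rule FF_j_mono) (use pos j V1(1) in auto)
  show False
  proof (cases "xs = xs'")
    case True then show False using V1(2) V2(2) lt by simp
  next
    case False
    then have "xs' < xs" using le by simp
    from Fj_mono[OF pos(1,3) j' pos(6) V2(1) this, of k2 d2 l] V1(2) V2(2) t lt show False by simp
  qed
qed

lemma part4:
  fixes k1 k2 d1 d2 l r ths :: real
  assumes pos: "k1 > 0" "k2 > 0" "d1 > 0" "d2 > 0" "l < 0" "r > 0" and t: "thin < ths"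
  shows "\<exists>J > 0. \<forall>j \<ge> J. \<forall>xs th1 th2.
          stefan_system k1 k2 d1 d2 l j r ths thin xs th1 th2 \<longrightarrow> M \<le> xs"
proof -
  define M' where "M' = max M 1"
  define Bd where "Bd = r*M'/k1 + d2*r/(k1*k2)"
  define v where "v = ths - thin"
  have v: "v > 0" using t by (simp add: v_def)
  have Bd: "Bd > 0" using pos by (simp add: Bd_def M'_def add_pos_pos)
  define J where "J = max 1 (2*Bd/v)"
  have J: "J > 0" "J \<ge> 1" "J \<ge> 2*Bd/v" by (auto simp: J_def)
  show ?thesis
  proof (intro exI[of _ J] conjI allI impI J(1))
    fix j xs th1 th2
    assume jJ: "J \<le> j" and s: "stefan_system k1 k2 d1 d2 l j r ths thin xs th1 th2"
    have j: "j > 0" "j \<ge> 1" using jJ J by auto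
    note V = sys_val[OF pos(1-4) j(1) pos(6) s]
    show "M \<le> xs"
    proof (rule ccontr)
      assume "\<not> M \<le> xs"
      then have xsM: "xs < M'" by (simp add: M'_def)
      have "Fj k1 k2 d1 d2 l r j xs \<le> r*xs/(k1*j) + d2*r/(k1*k2*j^2)"
        by (rule Fj_upper_j) (use pos j V(1) in auto)
      also have "\<dots> \<le> r*M'/(k1*j) + d2*r/(k1*k2*j)"
      proof (rule add_mono)
        show "r*xs/(k1*j) \<le> r*M'/(k1*j)" using xsM pos j
          by (intro divide_right_mono mult_left_mono) auto
        have "k1*k2*j \<le> k1*k2*j^2" using j pos by (simp add: power2_eq_square)
        then show "d2*r/(k1*k2*j^2) \<le> d2*r/(k1*k2*j)" using pos j
          by (intro divide_left_mono) auto
      qed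
      also have "\<dots> = Bd / j" using pos j by (simp add: Bd_def field_simps)
      also have "\<dots> \<le> Bd / J" using Bd J jJ by (intro divide_left_mono) auto
      also have "\<dots> \<le> v / 2"
      proof -
        have "Bd \<le> J * v / 2" using J(3) v by (simp add: field_simps)
        then show ?thesis using J by (simp add: field_simps)
      qed
      finally have "Fj k1 k2 d1 d2 l r j xs \<le> v/2" .
      then show False using V(2) v by (simp add: v_def)
    qed
  qed
qed

lemma part5:
  fixes k1 k2 d1 d2 l r ths :: real
  assumes pos: "k1 > 0" "k2 > 0" "d1 > 0" "d2 > 0" "l < 0" "r > 0" and j: "j > 0"
  shows "\<exists>T < ths. \<forall>thin \<le> T. \<forall>xs th1 th2.
          stefan_system k1 k2 d1 d2 l j r ths thin xs th1 th2 \<longrightarrow> M \<le> xs"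
proof -
  define a where "a = k1*j/d1"
  define c where "c = r/(k1*j)"
  define p where "p = (l*j + d2*(r/(k2*j)))/d1"
  have a: "a > 0" and c: "c > 0" using pos j by (auto simp: a_def c_def)
  have F: "Fj k1 k2 d1 d2 l r j = FF a c p" by (simp add: Fj_def a_def c_def p_def)
  define M' where "M' = max M 1"
  define T where "T = ths - (c * M' + \<bar>p - c\<bar> * M' + 1)"
  have "c * M' + \<bar>p - c\<bar> * M' \<ge> 0" using c by (simp add: M'_def)
  then have T: "T < ths" by (simp add: T_def)
  show ?thesis
  proof (intro exI[of _ T] conjI allI impI T)
    fix thin xs th1 th2
    assume tT: "thin \<le> T" and s: "stefan_system k1 k2 d1 d2 l j r ths thin xs th1 th2"
    note V = sys_val[OF pos(1-4) j pos(6) s]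
    show "M \<le> xs"
    proof (rule ccontr)
      assume "\<not> M \<le> xs"
      then have xsM: "xs \<le> M'" by (simp add: M'_def)
      have "FF a c p xs \<le> c * xs + \<bar>p - c\<bar> * xs" using FF_upper[OF a] V(1) by simp
      also have "\<dots> \<le> c * M' + \<bar>p - c\<bar> * M'" using xsM c by (intro add_mono mult_left_mono) auto
      finally show False using V(2) F tT by (simp add: T_def)
    qed
  qed
qed

theorem theorem4p1:
  fixes k1 k2 d1 d2 l r ths :: real
  assumes "k1 > 0" and "k2 > 0" and "d1 > 0" and "d2 > 0" and "l < 0" and "r > 0"
  shows
    "(\<forall>j thin. j > 0 \<longrightarrow> thin < ths \<longrightarrow>
        ((- l) \<le> d2 * r / (k2 * j\<^sup>2) \<longleftrightarrow> stefan_unique_solution k1 k2 d1 d2 l j r ths thin))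
     \<and> (\<forall>j thin thin' xs th1 th2 xs' th1' th2'.
          j > 0 \<longrightarrow> thin < thin' \<longrightarrow> thin' < ths \<longrightarrow>
          stefan_system k1 k2 d1 d2 l j r ths thin xs th1 th2 \<longrightarrow>
          stefan_system k1 k2 d1 d2 l j r ths thin' xs' th1' th2' \<longrightarrow> xs' < xs)
     \<and> (\<forall>j j' thin xs th1 th2 xs' th1' th2'.
          0 < j \<longrightarrow> j < j' \<longrightarrow> thin < ths \<longrightarrow>
          stefan_system k1 k2 d1 d2 l j r ths thin xs th1 th2 \<longrightarrow>
          stefan_system k1 k2 d1 d2 l j' r ths thin xs' th1' th2' \<longrightarrow> xs < xs')
     \<and> (\<forall>thin < ths. \<forall>M. \<exists>J > 0. \<forall>j \<ge> J. \<forall>xs th1 th2.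
          stefan_system k1 k2 d1 d2 l j r ths thin xs th1 th2 \<longrightarrow> M \<le> xs)
     \<and> (\<forall>j > 0. \<forall>M. \<exists>T < ths. \<forall>thin \<le> T. \<forall>xs th1 th2.
          stefan_system k1 k2 d1 d2 l j r ths thin xs th1 th2 \<longrightarrow> M \<le> xs)"
proof (intro conjI)
  show "\<forall>j thin. j > 0 \<longrightarrow> thin < ths \<longrightarrow>
        ((- l) \<le> d2 * r / (k2 * j\<^sup>2) \<longleftrightarrow> stefan_unique_solution k1 k2 d1 d2 l j r ths thin)"
    by (intro allI impI) (rule part1[OF assms]; assumption)
  show "\<forall>j thin thin' xs th1 th2 xs' th1' th2'.
          j > 0 \<longrightarrow> thin < thin' \<longrightarrow> thin' < ths \<longrightarrow>
          stefan_system k1 k2 d1 d2 l j r ths thin xs th1 th2 \<longrightarrow>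
          stefan_system k1 k2 d1 d2 l j r ths thin' xs' th1' th2' \<longrightarrow> xs' < xs"
    by (intro allI impI) (rule part2[OF assms]; assumption)
  show "\<forall>j j' thin xs th1 th2 xs' th1' th2'.
          0 < j \<longrightarrow> j < j' \<longrightarrow> thin < ths \<longrightarrow>
          stefan_system k1 k2 d1 d2 l j r ths thin xs th1 th2 \<longrightarrow>
          stefan_system k1 k2 d1 d2 l j' r ths thin xs' th1' th2' \<longrightarrow> xs < xs'"
    by (intro allI impI) (rule part3[OF assms]; assumption)
  show "\<forall>thin < ths. \<forall>M. \<exists>J > 0. \<forall>j \<ge> J. \<forall>xs th1 th2.
          stefan_system k1 k2 d1 d2 l j r ths thin xs th1 th2 \<longrightarrow> M \<le> xs"
    by (intro allI impI) (rule part4[OF assms]; assumption)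
  show "\<forall>j > 0. \<forall>M. \<exists>T < ths. \<forall>thin \<le> T. \<forall>xs th1 th2.
          stefan_system k1 k2 d1 d2 l j r ths thin xs th1 th2 \<longrightarrow> M \<le> xs"
    by (intro allI impI) (rule part5[OF assms]; assumption)
qed

end
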